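(* For $n\ge3$, the eigenvalues of $H(N_n)$ are $0$, $2$ and $-2$, each with multiplicity $n$.
   Context: For a digraph $X$ (finite vertex set, arcs are ordered pairs of distinct vertices), $H(X)$ has $(u,v)$-entry $1$ if $uv$ and $vu$ are arcs, $i$ if only $uv$ is an arc, $-i$ if only $vu$ is an arc, and $0$ otherwise. For $n\ge3$, the necklace digraph $N_n$ is the oriented graph with vertex set $\{v_j: j\in\mathbb{Z}_{2n}\}\cup\{w_k: k\in\mathbb{Z}_n\}$ (so $3n$ vertices) and arc set $\{v_jv_{j+1}: j\in\mathbb{Z}_{2n}\}\cup\{v_{2k}w_k,\ v_{2k+2}w_k: k\in\mathbb{Z}_n\}$, indices of $v$ taken modulo $2n$. *)

theory Defs
  imports "Jordan_Normal_Form.Char_Poly"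
begin

text \<open>A digraph on the vertex set {0..<m} is given by its arc set
  (a set of ordered pairs of distinct vertices).\<close>

definition herm_adj :: "nat \<Rightarrow> (nat \<times> nat) set \<Rightarrow> complex mat" where
  "herm_adj m A = mat m m (\<lambda>(u, v).
      if (u, v) \<in> A \<and> (v, u) \<in> A then 1
      else if (u, v) \<in> A then \<i>
      else if (v, u) \<in> A then - \<i>
      else 0)"

text \<open>Necklace digraph N_n on 3n vertices: v_j (j in Z_2n) is encoded as the
  number j (0 <= j < 2n), and w_k (k in Z_n) is encoded as the number 2n + k.\<close>

definition necklace_arcs :: "nat \<Rightarrow> (nat \<times> nat) set" where
  "necklace_arcs n =
      {(j, (j + 1) mod (2 * n)) | j. j < 2 * n}
    \<union> {(2 * k, 2 * n + k) | k. k < n}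
    \<union> {((2 * k + 2) mod (2 * n), 2 * n + k) | k. k < n}"

definition necklace_H :: "nat \<Rightarrow> complex mat" where
  "necklace_H n = herm_adj (3 * n) (necklace_arcs n)"

end

theory Submission imports Defs begin
lemma arc_iff:
  assumes "n \<ge> 3"
  shows "(u,v) \<in> necklace_arcs n \<longleftrightarrow>
    (u < 2*n \<and> v = (if u+1 = 2*n then 0 else u+1)) \<or>
    (\<exists>k<n. u = 2*k \<and> v = 2*n+k) \<or>
    (\<exists>k<n. u = (if k+1 = n then 0 else 2*k+2) \<and> v = 2*n+k)"
proof -
  have m1: "j < 2*n \<Longrightarrow> (j+1) mod (2*n) = (if j+1 = 2*n then 0 else j+1)" for j by auto
  have m2: "k < n \<Longrightarrow> (2*k+2) mod (2*n) = (if k+1 = n then 0 else 2*k+2)" for k by auto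
  have s1: "{(j, (j + 1) mod (2 * n)) |j. j < 2 * n} = {(j, if j+1 = 2*n then 0 else j+1) |j. j < 2 * n}"
    by (rule Collect_cong, auto simp del: One_nat_def simp: m1 simp: Suc_eq_plus1 simp del: add_2_eq_Suc add_2_eq_Suc')
  have s2: "{((2 * k + 2) mod (2 * n), 2 * n + k) |k. k < n} = {(if k+1 = n then 0 else 2*k+2, 2 * n + k) |k. k < n}"
    by (rule Collect_cong, auto simp del: One_nat_def simp: m2 simp: Suc_eq_plus1 simp del: add_2_eq_Suc add_2_eq_Suc')
  show ?thesis unfolding necklace_arcs_def s1 s2 by auto
qed

lemma herm_sym: "u < m \<Longrightarrow> v < m \<Longrightarrow> herm_adj m A $$ (u,v) = cnj (herm_adj m A $$ (v,u))"
  unfolding herm_adj_def by auto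

lemma herm_idx: "u < m \<Longrightarrow> v < m \<Longrightarrow> herm_adj m A $$ (u,v) = (if (u, v) \<in> A \<and> (v, u) \<in> A then 1
      else if (u, v) \<in> A then \<i>
      else if (v, u) \<in> A then - \<i>
      else 0)"
  unfolding herm_adj_def by auto

lemma arc_fst: "n \<ge> 3 \<Longrightarrow> (u,v) \<in> necklace_arcs n \<Longrightarrow> u < 2*n"
  by (subst (asm) arc_iff, auto)

lemma arc_small: "n \<ge> 3 \<Longrightarrow> (u,v) \<in> necklace_arcs n \<Longrightarrow> v < 2*n \<Longrightarrow> u < 2*n \<and> v = (if u+1 = 2*n then 0 else u+1)"
  by (subst (asm) arc_iff, auto)

lemma arc_big: "n \<ge> 3 \<Longrightarrow> (u,v) \<in> necklace_arcs n \<Longrightarrow> v \<ge> 2*n \<Longrightarrow> 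
   (\<exists>k<n. u = 2*k \<and> v = 2*n+k) \<or> (\<exists>k<n. u = (if k+1 = n then 0 else 2*k+2) \<and> v = 2*n+k)"
  using arc_iff[of n u v] by (auto split: if_splits)

lemma arc_EE: "n \<ge> 3 \<Longrightarrow> j < n \<Longrightarrow> (2*i, 2*j) \<notin> necklace_arcs n"
proof
  assume n: "n \<ge> 3" and j: "j < n" and a: "(2*i, 2*j) \<in> necklace_arcs n"
  have "2*j < 2*n" using j by simp
  from arc_small[OF n a this] show False by presburger
qed

lemma arc_OO: "n \<ge> 3 \<Longrightarrow> b < n \<Longrightarrow> (2*a+1, 2*b+1) \<notin> necklace_arcs n"
proof
  assume n: "n \<ge> 3" and b: "b < n" and a: "(2*a+1, 2*b+1) \<in> necklace_arcs n"
  have "2*b+1 < 2*n" using b by simp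
  from arc_small[OF n a this] show False by presburger
qed

lemma arc_toW_odd: "n \<ge> 3 \<Longrightarrow> (2*a+1, 2*n+k) \<notin> necklace_arcs n"
proof
  assume n: "n \<ge> 3" and a: "(2*a+1, 2*n+k) \<in> necklace_arcs n"
  from arc_big[OF n a] show False by presburger
qed

lemma arc_fromW: "n \<ge> 3 \<Longrightarrow> (2*n+k, v) \<notin> necklace_arcs n"
  using arc_fst by fastforce

lemma arc_EO: "n \<ge> 3 \<Longrightarrow> i < n \<Longrightarrow> b < n \<Longrightarrow> (2*i, 2*b+1) \<in> necklace_arcs n \<longleftrightarrow> b = i"
proof
  assume n: "n \<ge> 3" and i: "i < n" and b: "b < n"
  { assume a: "(2*i, 2*b+1) \<in> necklace_arcs n"
    have "2*b+1 < 2*n" using b by simp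
    from arc_small[OF n a this] show "b = i" by presburger }
  { assume "b = i" thus "(2*i, 2*b+1) \<in> necklace_arcs n" using i n by (subst arc_iff, auto) }
qed

lemma arc_OE: "n \<ge> 3 \<Longrightarrow> i < n \<Longrightarrow> b < n \<Longrightarrow> (2*b+1, 2*i) \<in> necklace_arcs n \<longleftrightarrow> b = (if i = 0 then n - 1 else i - 1)"
proof
  assume n: "n \<ge> 3" and i: "i < n" and b: "b < n"
  { assume a: "(2*b+1, 2*i) \<in> necklace_arcs n"
    have "2*i < 2*n" using i by simp
    from arc_small[OF n a this] show "b = (if i = 0 then n - 1 else i - 1)" by presburger }
  { assume "b = (if i = 0 then n - 1 else i - 1)" thus "(2*b+1, 2*i) \<in> necklace_arcs n" using i b n 
      by (subst arc_iff, auto) }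
qed

lemma arc_EW: "n \<ge> 3 \<Longrightarrow> i < n \<Longrightarrow> k < n \<Longrightarrow> (2*i, 2*n+k) \<in> necklace_arcs n \<longleftrightarrow> (k = i \<or> k = (if i = 0 then n - 1 else i - 1))"
proof
  assume n: "n \<ge> 3" and i: "i < n" and k: "k < n"
  { assume a: "(2*i, 2*n+k) \<in> necklace_arcs n"
    from arc_big[OF n a] show "k = i \<or> k = (if i = 0 then n - 1 else i - 1)" using i k by presburger }
  { assume kk: "k = i \<or> k = (if i = 0 then n - 1 else i - 1)" 
    show "(2*i, 2*n+k) \<in> necklace_arcs n"
    proof (cases "k = i")
      case True thus ?thesis unfolding arc_iff[OF n] using i by blast
    next
      case False
      hence "2*i = (if k+1 = n then 0 else 2*k+2)" using kk i k by (auto split: if_splits)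
      thus ?thesis unfolding arc_iff[OF n] using k by blast
    qed }
qed

definition sig :: "nat \<Rightarrow> nat \<Rightarrow> nat" where
  "sig n i = (if i < n then 2*i else if i < 2*n then 2*(i-n)+1 else i)"
definition pr :: "nat \<Rightarrow> nat \<Rightarrow> nat" where
  "pr n i = (if i = 0 then n - 1 else i - 1)"
definition Cm :: "nat \<Rightarrow> complex mat" where
  "Cm n = mat n (2*n) (\<lambda>(i,j). if j < n then (if j = i then \<i> else if j = pr n i then - \<i> else 0)
      else (if j - n = i \<or> j - n = pr n i then \<i> else 0))"
definition Dm :: "nat \<Rightarrow> complex mat" where
  "Dm n = mat (2*n) n (\<lambda>(j,i). cnj (Cm n $$ (i,j)))"

lemma pr_neq: "n \<ge> 3 \<Longrightarrow> i < n \<Longrightarrow> pr n i \<noteq> i" unfolding pr_def by auto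
lemma pr_lt: "n \<ge> 3 \<Longrightarrow> i < n \<Longrightarrow> pr n i < n" unfolding pr_def by auto

lemma H_EO: assumes n: "n \<ge> 3" and i: "i < n" and b: "b < n"
  shows "necklace_H n $$ (2*i, 2*b+1) = (if b = i then \<i> else if b = pr n i then - \<i> else 0)"
proof -
  have "necklace_H n $$ (2*i, 2*b+1) = (if (2*i, 2*b+1) \<in> necklace_arcs n \<and> (2*b+1, 2*i) \<in> necklace_arcs n then 1
      else if (2*i, 2*b+1) \<in> necklace_arcs n then \<i>
      else if (2*b+1, 2*i) \<in> necklace_arcs n then - \<i>
      else 0)" unfolding necklace_H_def using i b by (intro herm_idx, auto)
  also have "\<dots> = (if b = i then \<i> else if b = pr n i then - \<i> else 0)"
    unfolding arc_EO[OF n i b] arc_OE[OF n i b] pr_def[symmetric] using pr_neq[OF n i] by auto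
  finally show ?thesis .
qed

lemma H_EW: assumes n: "n \<ge> 3" and i: "i < n" and k: "k < n"
  shows "necklace_H n $$ (2*i, 2*n+k) = (if k = i \<or> k = pr n i then \<i> else 0)"
proof -
  have "necklace_H n $$ (2*i, 2*n+k) = (if (2*i, 2*n+k) \<in> necklace_arcs n \<and> (2*n+k, 2*i) \<in> necklace_arcs n then 1
      else if (2*i, 2*n+k) \<in> necklace_arcs n then \<i>
      else if (2*n+k, 2*i) \<in> necklace_arcs n then - \<i>
      else 0)" unfolding necklace_H_def using i k by (intro herm_idx, auto)
  also have "\<dots> = (if k = i \<or> k = pr n i then \<i> else 0)"
    unfolding arc_EW[OF n i k] pr_def[symmetric] using arc_fromW[OF n] by auto
  finally show ?thesis .
qed

lemma H_zero: assumes n: "n \<ge> 3" and u: "u < 3*n" and v: "v < 3*n" 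
  and nA: "(u,v) \<notin> necklace_arcs n" and nB: "(v,u) \<notin> necklace_arcs n"
  shows "necklace_H n $$ (u, v) = 0"
  unfolding necklace_H_def using u v nA nB by (subst herm_idx, auto)

lemma H_sym: "u < 3*n \<Longrightarrow> v < 3*n \<Longrightarrow> necklace_H n $$ (u, v) = cnj (necklace_H n $$ (v, u))"
  unfolding necklace_H_def by (rule herm_sym)

lemma H_upper: assumes n: "n \<ge> 3" and i: "i < n" and j1: "n \<le> j" and j2: "j < 3*n"
  shows "necklace_H n $$ (sig n i, sig n j) = Cm n $$ (i, j - n)"
proof (cases "j < 2*n")
  case True
  have s: "sig n i = 2*i" "sig n j = 2*(j-n)+1" using i j1 True unfolding sig_def by auto
  have jn: "j - n < n" using True j1 by auto
  show ?thesis unfolding s H_EO[OF n i jn] using True j1 i unfolding Cm_def by auto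
next
  case False
  have s: "sig n i = 2*i" "sig n j = 2*n + (j-2*n)" using i j1 False unfolding sig_def by auto
  show ?thesis unfolding s using H_EW[OF n i, of "j-2*n"] False j2 i unfolding Cm_def by auto
qed

lemma sig_lt: "i < 3*n \<Longrightarrow> sig n i < 3*n" unfolding sig_def by auto

lemma H_block: assumes n: "n \<ge> 3" and i: "i < 3*n" and j: "j < 3*n"
  shows "necklace_H n $$ (sig n i, sig n j) = four_block_mat (0\<^sub>m n n) (Cm n) (Dm n) (0\<^sub>m (2*n) (2*n)) $$ (i,j)"
proof -
  have dims: "dim_row (0\<^sub>m n n :: complex mat) = n" "dim_col (0\<^sub>m n n :: complex mat) = n"
    "dim_row (0\<^sub>m (2*n) (2*n) :: complex mat) = 2*n" "dim_col (0\<^sub>m (2*n) (2*n) :: complex mat) = 2*n" by auto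
  have R: "four_block_mat (0\<^sub>m n n) (Cm n) (Dm n) (0\<^sub>m (2*n) (2*n)) $$ (i,j) =
    (if i < n then if j < n then 0 else Cm n $$ (i, j - n) else if j < n then Dm n $$ (i - n, j) else 0)"
    using i j by (subst index_mat_four_block, auto)
  show ?thesis unfolding R
  proof (cases "i < n")
    case iE: True
    show "necklace_H n $$ (sig n i, sig n j) = (if i < n then if j < n then 0 else Cm n $$ (i, j - n) else if j < n then Dm n $$ (i - n, j) else 0)"
    proof (cases "j < n")
      case True
      have s: "sig n i = 2*i" "sig n j = 2*j" using iE True unfolding sig_def by auto
      show ?thesis unfolding s using iE True arc_EE[OF n] i j by (auto intro!: H_zero[OF n])
    next
      case False
      thus ?thesis using H_upper[OF n iE _ j] iE by auto
    qed
  next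
    case iN: False
    show "necklace_H n $$ (sig n i, sig n j) = (if i < n then if j < n then 0 else Cm n $$ (i, j - n) else if j < n then Dm n $$ (i - n, j) else 0)"
    proof (cases "j < n")
      case jE: True
      have "necklace_H n $$ (sig n i, sig n j) = cnj (necklace_H n $$ (sig n j, sig n i))"
        using sig_lt i j by (intro H_sym)
      also have "\<dots> = cnj (Cm n $$ (j, i - n))" using H_upper[OF n jE _ i] iN by auto
      finally show ?thesis using iN jE i unfolding Dm_def by auto
    next
      case jN: False
      have z: "necklace_H n $$ (sig n i, sig n j) = 0"
      proof (cases "i < 2*n")
        case iO: True
        have si: "sig n i = 2*(i-n)+1" using iN iO unfolding sig_def by auto
        show ?thesis
        proof (cases "j < 2*n")
          case True
          have sj: "sig n j = 2*(j-n)+1" using jN True unfolding sig_def by auto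
          show ?thesis unfolding si sj using arc_OO[OF n] iO True i j by (intro H_zero[OF n], auto)
        next
          case False
          obtain k where jk: "j = 2*n+k" using False by (metis le_Suc_ex not_less)
          have sj: "sig n j = 2*n+k" using jN False jk unfolding sig_def by auto
          show ?thesis unfolding si sj using arc_toW_odd[OF n, of "i-n" k] arc_fromW[OF n, of k] iO False i j jk
            by (intro H_zero[OF n], auto)
        qed
      next
        case iW: False
        obtain k where ik: "i = 2*n+k" using iW by (metis le_Suc_ex not_less)
        have si: "sig n i = 2*n+k" using iN iW ik unfolding sig_def by auto
        show ?thesis
        proof (cases "j < 2*n")
          case True
          have sj: "sig n j = 2*(j-n)+1" using jN True unfolding sig_def by auto
          show ?thesis unfolding si sj using arc_toW_odd[OF n, of "j-n" k] arc_fromW[OF n, of k] iW True i j ik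
            by (intro H_zero[OF n], auto)
        next
          case False
          obtain k' where jk: "j = 2*n+k'" using False by (metis le_Suc_ex not_less)
          have sj: "sig n j = 2*n+k'" using jN False jk unfolding sig_def by auto
          show ?thesis unfolding si sj using arc_fromW[OF n, of k] arc_fromW[OF n, of k'] iW False i j ik jk
            by (intro H_zero[OF n], auto)
        qed
      qed
      thus ?thesis using iN jN by simp
    qed
  qed
qed

lemma pr_inj: "n \<ge> 3 \<Longrightarrow> i < n \<Longrightarrow> i' < n \<Longrightarrow> pr n i = pr n i' \<Longrightarrow> i = i'"
  unfolding pr_def by (auto split: if_splits)

lemma CD: assumes n: "n \<ge> 3" shows "Cm n * Dm n = 4 \<cdot>\<^sub>m 1\<^sub>m n"
proof (rule eq_matI)
  fix i i' assume i: "i < dim_row (4 \<cdot>\<^sub>m 1\<^sub>m n :: complex mat)" and i': "i' < dim_col (4 \<cdot>\<^sub>m 1\<^sub>m n :: complex mat)"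
  hence i: "i < n" and i': "i' < n" by auto
  define F where "F j = Cm n $$ (i,j) * cnj (Cm n $$ (i',j))" for j
  have "(Cm n * Dm n) $$ (i,i') = (\<Sum> j \<in> {0..<2*n}. F j)"
    using i i' unfolding F_def by (auto simp: Cm_def Dm_def scalar_prod_def intro!: sum.cong)
  also have "\<dots> = (\<Sum> j \<in> {i, pr n i, n+i, n+pr n i}. F j)"
  proof (rule sum.mono_neutral_right)
    show "{i, pr n i, n + i, n + pr n i} \<subseteq> {0..<2 * n}" using i pr_lt[OF n i] by auto
    show "\<forall>j\<in>{0..<2 * n} - {i, pr n i, n + i, n + pr n i}. F j = 0"
      unfolding F_def Cm_def using i by auto
  qed auto
  also have "\<dots> = F i + F (pr n i) + F (n+i) + F (n + pr n i)"
    using pr_neq[OF n i] pr_lt[OF n i] i by (simp add: algebra_simps)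
  also have "\<dots> = (4 \<cdot>\<^sub>m 1\<^sub>m n) $$ (i,i')"
    using i i' pr_neq[OF n i] pr_lt[OF n i] pr_neq[OF n i'] pr_lt[OF n i'] pr_inj[OF n i i']
    unfolding F_def Cm_def by auto
  finally show "(Cm n * Dm n) $$ (i,i') = (4 \<cdot>\<^sub>m 1\<^sub>m n) $$ (i,i')" .
qed (auto simp: Cm_def Dm_def)

lemma block_det:
  fixes C :: "'a :: idom mat" and X c :: 'a
  assumes C: "C \<in> carrier_mat n m" and D: "D \<in> carrier_mat m n"
    and CD: "C * D = c \<cdot>\<^sub>m 1\<^sub>m n" and mn: "n \<le> m" and X: "X \<noteq> 0"
  shows "det (four_block_mat (X \<cdot>\<^sub>m 1\<^sub>m n) (- C) (- D) (X \<cdot>\<^sub>m 1\<^sub>m m)) = X ^ (m - n) * (X * X - c) ^ n"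
proof -
  let ?M = "four_block_mat (X \<cdot>\<^sub>m 1\<^sub>m n) (- C) (- D) (X \<cdot>\<^sub>m 1\<^sub>m m)"
  let ?F = "four_block_mat (X \<cdot>\<^sub>m 1\<^sub>m n) (0\<^sub>m n m) D (X \<cdot>\<^sub>m 1\<^sub>m m)"
  have Mc: "?M \<in> carrier_mat (n+m) (n+m)" by simp
  have Fc: "?F \<in> carrier_mat (n+m) (n+m)" by simp
  have prod: "?M * ?F = four_block_mat ((X * X - c) \<cdot>\<^sub>m 1\<^sub>m n) (- (X \<cdot>\<^sub>m C)) (0\<^sub>m m n) ((X * X) \<cdot>\<^sub>m 1\<^sub>m m)"
  proof -
    have "?M * ?F = four_block_mat (X \<cdot>\<^sub>m 1\<^sub>m n * (X \<cdot>\<^sub>m 1\<^sub>m n) + - C * D) (X \<cdot>\<^sub>m 1\<^sub>m n * 0\<^sub>m n m + - C * (X \<cdot>\<^sub>m 1\<^sub>m m))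
        (- D * (X \<cdot>\<^sub>m 1\<^sub>m n) + X \<cdot>\<^sub>m 1\<^sub>m m * D) (- D * 0\<^sub>m n m + X \<cdot>\<^sub>m 1\<^sub>m m * (X \<cdot>\<^sub>m 1\<^sub>m m))"
      by (rule mult_four_block_mat, insert C D, auto)
    also have "\<dots> = four_block_mat ((X * X - c) \<cdot>\<^sub>m 1\<^sub>m n) (- (X \<cdot>\<^sub>m C)) (0\<^sub>m m n) ((X * X) \<cdot>\<^sub>m 1\<^sub>m m)"
    proof (rule cong_four_block_mat)
      have e1: "- C * D = - (c \<cdot>\<^sub>m 1\<^sub>m n)" using C D CD by simp
      show "X \<cdot>\<^sub>m 1\<^sub>m n * (X \<cdot>\<^sub>m 1\<^sub>m n) + - C * D = (X * X - c) \<cdot>\<^sub>m 1\<^sub>m n"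
        unfolding e1 by (rule eq_matI, auto simp: algebra_simps)
      show "X \<cdot>\<^sub>m 1\<^sub>m n * 0\<^sub>m n m + - C * (X \<cdot>\<^sub>m 1\<^sub>m m) = - (X \<cdot>\<^sub>m C)"
        using C D by (intro eq_matI, auto simp: scalar_prod_def if_distrib[of "\<lambda>x. _ * x"] cong: if_cong)
      show "- D * (X \<cdot>\<^sub>m 1\<^sub>m n) + X \<cdot>\<^sub>m 1\<^sub>m m * D = 0\<^sub>m m n"
        using C D by (intro eq_matI, auto simp: scalar_prod_def if_distrib[of "\<lambda>x. _ * x"] if_distrib[of "\<lambda>x. x * _"] cong: if_cong)
      show "- D * 0\<^sub>m n m + X \<cdot>\<^sub>m 1\<^sub>m m * (X \<cdot>\<^sub>m 1\<^sub>m m) = (X * X) \<cdot>\<^sub>m 1\<^sub>m m"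
        using C D by (intro eq_matI, auto simp: scalar_prod_def if_distrib[of "\<lambda>x. _ * x"] cong: if_cong)
    qed
    finally show ?thesis .
  qed
  have "det (?M * ?F) = det ?M * det ?F" by (rule det_mult[OF Mc Fc])
  moreover have "det ?F = X ^ n * X ^ m"
    by (subst det_four_block_mat_upper_right_zero[of _ n _ m], insert D, auto)
  moreover have "det (?M * ?F) = (X * X - c) ^ n * (X * X) ^ m"
    unfolding prod
    by (subst det_four_block_mat_lower_left_zero[of _ n _ m], insert C, auto)
  ultimately have "det ?M * (X ^ n * X ^ m) = (X * X - c) ^ n * (X * X) ^ m" by simp
  also have "(X * X) ^ m = (X ^ n * X ^ m) * X ^ (m - n)"
    using mn by (simp add: power_mult_distrib power_add[symmetric])
  finally have "(X ^ n * X ^ m) * det ?M = (X ^ n * X ^ m) * (X ^ (m - n) * (X * X - c) ^ n)"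
    by (simp add: ac_simps)
  thus ?thesis using X by simp
qed

lemma det_perm_both:
  fixes A :: "'a :: comm_ring_1 mat"
  assumes A: "A \<in> carrier_mat n n" and p: "p permutes {0..<n}"
  shows "det (mat n n (\<lambda>(i,j). A $$ (p i, p j))) = det A"
proof -
  have pn: "i < n \<Longrightarrow> p i < n" for i using permutes_in_image[OF p] by auto
  define A1 where "A1 = mat n n (\<lambda>(i,j). A $$ (i, p j))"
  have A1c: "A1 \<in> carrier_mat n n" unfolding A1_def by auto
  have e1: "mat n n (\<lambda>(i,j). A $$ (p i, p j)) = mat n n (\<lambda>(i,j). A1 $$ (p i, j))"
    by (rule eq_matI, auto simp: A1_def pn)
  have e2: "transpose_mat A1 = mat n n (\<lambda>(i,j). (transpose_mat A) $$ (p i, j))"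
    by (rule eq_matI, insert A, auto simp: A1_def pn)
  have "det A1 = det (transpose_mat A1)" using det_transpose[OF A1c] by simp
  also have "\<dots> = signof p * det (transpose_mat A)" unfolding e2
    by (rule det_permute_rows[OF _ p], insert A, auto)
  also have "det (transpose_mat A) = det A" using det_transpose[OF A] by simp
  finally have d1: "det A1 = signof p * det A" .
  have "det (mat n n (\<lambda>(i,j). A $$ (p i, p j))) = signof p * det A1" unfolding e1
    by (rule det_permute_rows[OF A1c p])
  also have "\<dots> = (signof p * signof p) * det A" using d1 by simp
  also have "signof p * signof p = (1::'a)" 
    by (simp add: sign_def)
  finally show ?thesis by simp
qed

lemma sig_inj: "inj_on (sig n) {0..<3*n}"
proof (rule inj_onI)
  fix x y assume x: "x \<in> {0..<3*n}" and y: "y \<in> {0..<3*n}" and e: "sig n x = sig n y"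
  show "x = y"
  proof (cases "x < n")
    case True
    then show ?thesis using e unfolding sig_def by (cases "y < n"; cases "y < 2*n"; simp; presburger)
  next
    case F1: False
    show ?thesis
    proof (cases "x < 2*n")
      case True
      then show ?thesis using e F1 unfolding sig_def by (cases "y < n"; cases "y < 2*n"; simp; presburger)
    next
      case False
      then show ?thesis using e F1 unfolding sig_def by (cases "y < n"; cases "y < 2*n"; simp; presburger)
    qed
  qed
qed

lemma sig_permutes: "sig n permutes {0..<3*n}"
proof (rule bij_imp_permutes)
  have "sig n ` {0..<3*n} \<subseteq> {0..<3*n}" using sig_lt by auto
  hence "sig n ` {0..<3*n} = {0..<3*n}" using sig_inj by (intro endo_inj_surj, auto)
  thus "bij_betw (sig n) {0..<3*n} {0..<3*n}" using sig_inj unfolding bij_betw_def by auto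
  show "x \<notin> {0..<3*n} \<Longrightarrow> sig n x = x" for x unfolding sig_def by auto
qed

theorem corollary7p2:
  fixes n :: nat
  assumes "n \<ge> 3"
  shows "char_poly (necklace_H n) = [:0, 1:] ^ n * [:-2, 1:] ^ n * [:2, 1:] ^ n"
proof -
  note n = assms
  define H where "H = necklace_H n"
  have Hc: "H \<in> carrier_mat (3*n) (3*n)" unfolding H_def necklace_H_def herm_adj_def by auto
  define B where "B = four_block_mat (0\<^sub>m n n) (Cm n) (Dm n) (0\<^sub>m (2*n) (2*n))"
  have Cc: "Cm n \<in> carrier_mat n (2*n)" unfolding Cm_def by auto
  have Dc: "Dm n \<in> carrier_mat (2*n) n" unfolding Dm_def by auto
  have Bc: "B \<in> carrier_mat (3*n) (3*n)" unfolding B_def by auto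
  have inj: "i < 3*n \<Longrightarrow> j < 3*n \<Longrightarrow> sig n i = sig n j \<longleftrightarrow> i = j" for i j
    using inj_on_eq_iff[OF sig_inj[of n], of i j] by simp
  have HB: "mat (3*n) (3*n) (\<lambda>(i,j). H $$ (sig n i, sig n j)) = B"
    by (rule eq_matI, insert Bc, auto simp: H_def B_def[symmetric] H_block[OF n])
  have "char_poly H = det (mat (3*n) (3*n) (\<lambda>(i,j). char_poly_matrix H $$ (sig n i, sig n j)))"
    unfolding char_poly_def
    by (rule det_perm_both[symmetric, OF _ sig_permutes], insert Hc, simp)
  also have "mat (3*n) (3*n) (\<lambda>(i,j). char_poly_matrix H $$ (sig n i, sig n j)) = char_poly_matrix B"
    unfolding HB[symmetric] char_poly_matrix_def using Hc sig_lt inj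
    by (intro eq_matI, auto)
  also have "char_poly_matrix B = four_block_mat ([:0,1:] \<cdot>\<^sub>m 1\<^sub>m n) (- map_mat (\<lambda>a. [:a:]) (Cm n))
      (- map_mat (\<lambda>a. [:a:]) (Dm n)) ([:0,1:] \<cdot>\<^sub>m 1\<^sub>m (2*n))"
    unfolding char_poly_matrix_def B_def using Cc Dc
    by (intro eq_matI, auto)
  also have "det \<dots> = [:0,1:] ^ (2*n - n) * ([:0,1:] * [:0,1:] - [:4:]) ^ n"
  proof (rule block_det)
    show "map_mat (\<lambda>a. [:a:]) (Cm n) * map_mat (\<lambda>a. [:a:]) (Dm n) = [:4:] \<cdot>\<^sub>m 1\<^sub>m n"
    proof (rule eq_matI)
      fix i j assume "i < dim_row ([:4:] \<cdot>\<^sub>m 1\<^sub>m n :: complex poly mat)" "j < dim_col ([:4:] \<cdot>\<^sub>m 1\<^sub>m n :: complex poly mat)"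
      hence i: "i < n" and j: "j < n" by auto
      have "(map_mat (\<lambda>a. [:a:]) (Cm n) * map_mat (\<lambda>a. [:a:]) (Dm n)) $$ (i,j) 
        = [: (Cm n * Dm n) $$ (i,j) :]"
        using i j Cc Dc by (simp add: scalar_prod_def sum_to_poly mult.commute)
      also have "\<dots> = ([:4:] \<cdot>\<^sub>m 1\<^sub>m n) $$ (i,j)" unfolding CD[OF n] using i j by auto
      finally show "(map_mat (\<lambda>a. [:a:]) (Cm n) * map_mat (\<lambda>a. [:a:]) (Dm n)) $$ (i,j) = ([:4:] \<cdot>\<^sub>m 1\<^sub>m n) $$ (i,j)" .
    qed (insert Cc Dc, auto)
  qed (insert Cc Dc, auto)
  also have "\<dots> = [:0, 1:] ^ n * [:-2, 1:] ^ n * [:2, 1:] ^ n"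
  proof -
    have e: "[:0,1:] * [:0,1:] - [:4:] = [:-2,1:] * [:2,1::complex:]" by simp
    have "2*n - n = n" by simp
    thus ?thesis unfolding e power_mult_distrib by (simp only: mult.assoc)
  qed
  finally show ?thesis unfolding H_def .
qed

end
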